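(* Let $(V,g)$ be a Euclidean vector space and $\mathfrak{g}\subseteq\mathfrak{so}(V)$ a Lie subalgebra such that the map $\varepsilon^{\perp}:\Lambda^3V\to\Lambda^1V\otimes\mathfrak{g}^{\perp}$, $\varepsilon^\perp(T)_X=(X\lrcorner T)_{\mathfrak{g}^{\perp}}$, is surjective. Then the representation $(\mathfrak{g},V)$ is irreducible.
   Context: $\Lambda^2V$ is identified with $\mathfrak{so}(V)$ via $F\mapsto g(F\cdot,\cdot)$; $\mathfrak{g}^\perp$ is the orthogonal complement of $\mathfrak{g}$ in $\Lambda^2V$, and $(\cdot)_{\mathfrak{g}^\perp}$ the orthogonal projection onto it. *)

theory Defs
  imports "HOL-Analysis.Analysis"
begin

text \<open>so(V): skew-adjoint endomorphisms of the Euclidean space V (identified with Lambda^2 V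
  via F |-> g(F .,.)).\<close>
definition so_V :: "('a::euclidean_space \<Rightarrow> 'a) set" where
  "so_V = {F. linear F \<and> (\<forall>x y. inner (F x) y = - inner x (F y))}"

text \<open>The standard inner product on Lambda^2 V = so(V) (up to a positive constant):
  sum over an orthonormal basis.\<close>
definition ip2 :: "('a::euclidean_space \<Rightarrow> 'a) \<Rightarrow> ('a \<Rightarrow> 'a) \<Rightarrow> real" where
  "ip2 F G = (\<Sum>b\<in>Basis. inner (F b) (G b))"

definition lie_subalgebra :: "('a::euclidean_space \<Rightarrow> 'a) set \<Rightarrow> bool" where
  "lie_subalgebra g \<longleftrightarrow> g \<subseteq> so_V \<and> (\<lambda>x. 0) \<in> g
     \<and> (\<forall>F\<in>g. \<forall>G\<in>g. (\<lambda>x. F x + G x) \<in> g)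
     \<and> (\<forall>c. \<forall>F\<in>g. (\<lambda>x. c *\<^sub>R F x) \<in> g)
     \<and> (\<forall>F\<in>g. \<forall>G\<in>g. (\<lambda>x. F (G x) - G (F x)) \<in> g)"

definition perp2 :: "('a::euclidean_space \<Rightarrow> 'a) set \<Rightarrow> ('a \<Rightarrow> 'a) set" where
  "perp2 g = {F\<in>so_V. \<forall>G\<in>g. ip2 F G = 0}"

definition proj_perp :: "('a::euclidean_space \<Rightarrow> 'a) set \<Rightarrow> ('a \<Rightarrow> 'a) \<Rightarrow> ('a \<Rightarrow> 'a)" where
  "proj_perp g F = (THE P. P \<in> perp2 g \<and> (\<lambda>x. F x - P x) \<in> g)"

text \<open>Lambda^3 V: alternating trilinear forms.\<close>
definition alt3 :: "('a::euclidean_space \<Rightarrow> 'a \<Rightarrow> 'a \<Rightarrow> real) \<Rightarrow> bool" where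
  "alt3 T \<longleftrightarrow> (\<forall>y z. linear (\<lambda>x. T x y z)) \<and> (\<forall>x z. linear (\<lambda>y. T x y z))
     \<and> (\<forall>x y. linear (\<lambda>z. T x y z))
     \<and> (\<forall>x y z. T x y z = - T y x z) \<and> (\<forall>x y z. T x y z = - T x z y)"

text \<open>Interior product X \<lrcorner> T, as the skew endomorphism F with g(F Y, Z) = T(X,Y,Z).\<close>
definition contr :: "'a::euclidean_space \<Rightarrow> ('a \<Rightarrow> 'a \<Rightarrow> 'a \<Rightarrow> real) \<Rightarrow> ('a \<Rightarrow> 'a)" where
  "contr X T = (\<lambda>Y. \<Sum>b\<in>Basis. T X Y b *\<^sub>R b)"

text \<open>epsilon-perp: Lambda^3 V -> Lambda^1 V (x) g-perp is surjective: every linear map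
  phi : V -> g-perp is of the form X |-> (X \<lrcorner> T)_{g-perp} for some T in Lambda^3 V.\<close>
definition eps_perp_surj :: "('a::euclidean_space \<Rightarrow> 'a) set \<Rightarrow> bool" where
  "eps_perp_surj g \<longleftrightarrow>
     (\<forall>\<phi> :: 'a \<Rightarrow> 'a \<Rightarrow> 'a. (\<forall>v. linear (\<lambda>X. \<phi> X v)) \<and> (\<forall>X. \<phi> X \<in> perp2 g) \<longrightarrow>
        (\<exists>T. alt3 T \<and> (\<forall>X. proj_perp g (contr X T) = \<phi> X)))"

text \<open>Irreducibility of the representation (g, V); V is nonzero since DIM('a) \<ge> 1.\<close>
definition irreducible_rep :: "('a::euclidean_space \<Rightarrow> 'a) set \<Rightarrow> bool" where
  "irreducible_rep g \<longleftrightarrow> (UNIV :: 'a set) \<noteq> {0} \<and>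
     (\<forall>W. subspace W \<and> (\<forall>F\<in>g. \<forall>w\<in>W. F w \<in> W) \<longrightarrow> W = {0} \<or> W = UNIV)"

end

theory Submission
  imports Defs
begin

typedef (overloaded) ('a::euclidean_space) bidx = "Basis :: 'a set"
  using nonempty_Basis by blast

instance bidx :: (euclidean_space) finite
proof
  have "(UNIV :: 'a bidx set) = Abs_bidx ` Basis"
    using type_definition.Abs_image[OF type_definition_bidx] by auto
  then show "finite (UNIV :: 'a bidx set)" by (metis finite_Basis finite_imageI)
qed

definition enc :: "('a::euclidean_space \<Rightarrow> 'a) \<Rightarrow> real^('a bidx \<times> 'a bidx)" where
  "enc F = (\<chi> p. inner (F (Rep_bidx (fst p))) (Rep_bidx (snd p)))"

lemma sum_bidx: "(\<Sum>i\<in>UNIV. h (Rep_bidx i)) = (\<Sum>b\<in>(Basis::'a::euclidean_space set). h b)"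
proof -
  have "inj (Rep_bidx :: 'a bidx \<Rightarrow> 'a)" by (meson Rep_bidx_inject injI)
  then have "sum h (Rep_bidx ` (UNIV :: 'a bidx set)) = sum (h \<circ> Rep_bidx) UNIV"
    by (simp add: sum.reindex)
  moreover have "Rep_bidx ` (UNIV :: 'a bidx set) = Basis"
    using type_definition.Rep_range[OF type_definition_bidx] by simp
  ultimately show ?thesis by simp
qed

lemma enc_inner: "inner (enc F) (enc G) = ip2 F G"
proof -
  have "inner (enc F) (enc G) = (\<Sum>p\<in>UNIV. enc F $ p * enc G $ p)" by (simp add: inner_vec_def)
  also have "\<dots> = (\<Sum>i\<in>UNIV. \<Sum>j\<in>UNIV. enc F $ (i,j) * enc G $ (i,j))"
    by (simp add: UNIV_Times_UNIV[symmetric] sum.cartesian_product del: UNIV_Times_UNIV)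
  also have "\<dots> = (\<Sum>i\<in>UNIV. \<Sum>j\<in>UNIV. inner (F (Rep_bidx i)) (Rep_bidx j) * inner (G (Rep_bidx i)) (Rep_bidx j))"
    by (simp add: enc_def)
  also have "\<dots> = (\<Sum>i\<in>UNIV. \<Sum>c\<in>Basis. inner (F (Rep_bidx i)) c * inner (G (Rep_bidx i)) c)"
    by (rule sum.cong[OF refl], rule sum_bidx)
  also have "\<dots> = (\<Sum>b\<in>Basis. \<Sum>c\<in>Basis. inner (F b) c * inner (G b) c)"
    by (rule sum_bidx)
  also have "\<dots> = (\<Sum>b\<in>Basis. inner (F b) (G b))"
    by (simp add: euclidean_inner[symmetric])
  finally show ?thesis by (simp add: ip2_def)
qed

lemma enc_add: "enc (\<lambda>x. F x + G x) = enc F + enc G"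
  by (simp add: enc_def vec_eq_iff inner_add_left)
lemma enc_diff: "enc (\<lambda>x. F x - G x) = enc F - enc G"
  by (simp add: enc_def vec_eq_iff inner_diff_left)
lemma enc_scale: "enc (\<lambda>x. c *\<^sub>R F x) = c *\<^sub>R enc F"
  by (simp add: enc_def vec_eq_iff)
lemma enc_zero: "enc (\<lambda>x. 0) = 0"
  by (simp add: enc_def vec_eq_iff)

lemma proj_exists:
  assumes lg: "lie_subalgebra g" and F: "F \<in> so_V"
  shows "\<exists>P. P \<in> perp2 g \<and> (\<lambda>x. F x - P x) \<in> g"
proof -
  let ?S = "enc ` g"
  have cl: "g \<subseteq> so_V" "(\<lambda>x. 0) \<in> g" "\<And>F G. F\<in>g \<Longrightarrow> G\<in>g \<Longrightarrow> (\<lambda>x. F x + G x) \<in> g"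
     "\<And>c F. F\<in>g \<Longrightarrow> (\<lambda>x. c *\<^sub>R F x) \<in> g"
    using lg unfolding lie_subalgebra_def by auto
  have sub: "subspace ?S"
    unfolding subspace_def
  proof (intro conjI ballI allI)
    show "0 \<in> ?S" by (rule image_eqI[where f=enc, OF enc_zero[symmetric] cl(2)])
  next
    fix x y assume "x \<in> ?S" "y \<in> ?S"
    then obtain F G where FG: "F \<in> g" "G \<in> g" and "x = enc F" "y = enc G" by auto
    moreover have "enc F + enc G \<in> ?S"
      by (rule image_eqI[where f=enc, OF enc_add[symmetric] cl(3)[OF FG]])
    ultimately show "x + y \<in> ?S" by simp
  next
    fix c x assume "x \<in> ?S"
    then obtain F where FG: "F \<in> g" and "x = enc F" by auto
    moreover have "c *\<^sub>R enc F \<in> ?S"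
      by (rule image_eqI[where f=enc, OF enc_scale[symmetric] cl(4)[OF FG]])
    ultimately show "c *\<^sub>R x \<in> ?S" by simp
  qed
  obtain y z where y: "y \<in> span ?S" and z: "\<And>w. w \<in> span ?S \<Longrightarrow> orthogonal z w"
    and e: "enc F = y + z"
    using orthogonal_subspace_decomp_exists[of ?S "enc F"] by blast
  have "span ?S = ?S" using sub by (simp add: span_eq_iff)
  have yS: "y \<in> ?S" using y \<open>span ?S = ?S\<close> by simp
  then obtain G where G: "G \<in> g" "y = enc G" by blast
  define P where "P = (\<lambda>x. F x - G x)"
  have Gs: "G \<in> so_V" using G cl(1) by auto
  have "P \<in> so_V"
    using F Gs unfolding so_V_def P_def
    by (auto simp: linear_compose_sub inner_diff_left inner_diff_right)
  moreover have "\<forall>H\<in>g. ip2 P H = 0"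
  proof
    fix H assume "H \<in> g"
    have "enc P = z" using e G by (simp add: P_def enc_diff)
    then have "inner (enc P) (enc H) = 0"
      using z[of "enc H"] \<open>H \<in> g\<close> \<open>span ?S = ?S\<close> by (auto simp: orthogonal_def)
    then show "ip2 P H = 0" by (simp add: enc_inner)
  qed
  moreover have "(\<lambda>x. F x - P x) = G" by (simp add: P_def)
  ultimately show ?thesis using G unfolding perp2_def by auto
qed

lemma proj_unique:
  assumes lg: "lie_subalgebra g"
    and "P1 \<in> perp2 g" "(\<lambda>x. F x - P1 x) \<in> g" "P2 \<in> perp2 g" "(\<lambda>x. F x - P2 x) \<in> g"
  shows "P1 = P2"
proof -
  have cl: "(\<lambda>x. 0) \<in> g" "\<And>F G. F\<in>g \<Longrightarrow> G\<in>g \<Longrightarrow> (\<lambda>x. F x + G x) \<in> g"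
     "\<And>c F. F\<in>g \<Longrightarrow> (\<lambda>x. c *\<^sub>R F x) \<in> g"
    using lg unfolding lie_subalgebra_def by auto
  define D where "D = (\<lambda>x. P1 x - P2 x)"
  have "(\<lambda>x. (F x - P2 x) + (-1) *\<^sub>R (F x - P1 x)) \<in> g"
    using cl assms by blast
  moreover have "(\<lambda>x. (F x - P2 x) + (-1) *\<^sub>R (F x - P1 x)) = D"
    by (auto simp: D_def algebra_simps)
  ultimately have D: "D \<in> g" by simp
  have "ip2 P1 D = 0" "ip2 P2 D = 0" using assms D unfolding perp2_def by auto
  then have "ip2 D D = 0"
    by (simp add: ip2_def D_def inner_diff_left sum_subtractf)
  then have "(\<Sum>b\<in>Basis. inner (D b) (D b)) = 0" by (simp add: ip2_def)
  then have "\<forall>b\<in>Basis. inner (D b) (D b) = 0"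
    by (subst (asm) sum_nonneg_eq_0_iff) auto
  then have z: "\<forall>b\<in>Basis. D b = 0" by simp
  have "linear D" using assms unfolding perp2_def so_V_def D_def
    by (auto intro: linear_compose_sub)
  then have "D = (\<lambda>x. 0)"
    using z by (intro linear_eq_stdbasis) (auto simp: linear_zero)
  show ?thesis
  proof (rule ext)
    fix x
    have "D x = 0" using \<open>D = (\<lambda>x. 0)\<close> by simp
    then show "P1 x = P2 x" by (simp add: D_def)
  qed
qed

lemma proj_prop:
  assumes "lie_subalgebra g" "F \<in> so_V"
  shows "proj_perp g F \<in> perp2 g \<and> (\<lambda>x. F x - proj_perp g F x) \<in> g"
proof -
  have "\<exists>!P. P \<in> perp2 g \<and> (\<lambda>x. F x - P x) \<in> g"
    using proj_exists[OF assms] proj_unique[OF assms(1)] by blast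
  then show ?thesis unfolding proj_perp_def by (rule theI')
qed


theorem lemma8p1:
  fixes g :: "('a::euclidean_space \<Rightarrow> 'a) set"
  assumes "lie_subalgebra g"
    and "eps_perp_surj g"
  shows "irreducible_rep g"
proof -
  have gso: "g \<subseteq> so_V" using assms(1) unfolding lie_subalgebra_def by auto
  have ne: "(UNIV :: 'a set) \<noteq> {0}"
  proof -
    obtain b :: 'a where "b \<in> Basis" using nonempty_Basis by blast
    then have "b \<noteq> 0" by (auto simp: nonzero_Basis)
    then show ?thesis by auto
  qed
  show ?thesis unfolding irreducible_rep_def
  proof (intro conjI allI impI)
    show "(UNIV :: 'a set) \<noteq> {0}" by (fact ne)
    fix W :: "'a set"
    assume WA: "subspace W \<and> (\<forall>F\<in>g. \<forall>w\<in>W. F w \<in> W)"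
    then have sW: "subspace W" and inv: "\<And>F w. F \<in> g \<Longrightarrow> w \<in> W \<Longrightarrow> F w \<in> W" by auto
    show "W = {0} \<or> W = UNIV"
    proof (rule ccontr)
      assume nn: "\<not> (W = {0} \<or> W = UNIV)"
      have "0 \<in> W" using sW by (simp add: subspace_0)
      then obtain a where aW: "a \<in> W" and a0: "a \<noteq> 0" using nn by blast
      obtain x where xW: "x \<notin> W" using nn by blast
      obtain y z where y: "y \<in> span W" and z: "\<And>w. w \<in> span W \<Longrightarrow> orthogonal z w"
        and xyz: "x = y + z"
        using orthogonal_subspace_decomp_exists[of W x] by blast
      have spW: "span W = W" using sW by (simp add: span_eq_iff)
      define u where "u = z"
      have uW: "\<And>w. w \<in> W \<Longrightarrow> inner u w = 0" using z spW by (auto simp: u_def orthogonal_def)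
      have u0: "u \<noteq> 0" using xW xyz y spW u_def by auto
      have skew: "\<And>G v w. G \<in> g \<Longrightarrow> inner (G v) w = - inner v (G w)"
        using gso unfolding so_V_def by auto
      have Gu: "\<And>G w. G \<in> g \<Longrightarrow> w \<in> W \<Longrightarrow> inner (G u) w = 0"
        using skew uW inv by fastforce
      define \<phi> where "\<phi> = (\<lambda>X Y. (inner a X) *\<^sub>R ((inner a Y) *\<^sub>R u - (inner u Y) *\<^sub>R a))"
      have lin: "\<forall>v. linear (\<lambda>X. \<phi> X v)"
        by (auto intro!: linearI simp: \<phi>_def inner_add_right scaleR_add_left)
      have perp: "\<forall>X. \<phi> X \<in> perp2 g"
      proof
        fix X
        have "\<phi> X \<in> so_V" unfolding so_V_def
        proof (intro CollectI conjI allI)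
          show "linear (\<phi> X)"
            unfolding \<phi>_def by (intro linearI) (simp_all add: inner_add_right scaleR_add_left scaleR_diff_right algebra_simps)
          fix y z
          show "inner (\<phi> X y) z = - inner y (\<phi> X z)"
            unfolding \<phi>_def by (simp add: inner_diff_left inner_diff_right inner_commute[of y] right_diff_distrib)
        qed
        moreover have "\<forall>G\<in>g. ip2 (\<phi> X) G = 0"
        proof
          fix G assume G: "G \<in> g"
          have "ip2 (\<phi> X) G = (inner a X) * ((\<Sum>b\<in>Basis. (inner a b) * inner u (G b))
                   - (\<Sum>b\<in>Basis. (inner u b) * inner a (G b)))"
            by (simp add: ip2_def \<phi>_def inner_diff_left sum_distrib_left sum_subtractf algebra_simps)
          also have "\<dots> = (inner a X) * ((\<Sum>b\<in>Basis. - ((inner a b) * inner (G u) b))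
                   - (\<Sum>b\<in>Basis. - ((inner u b) * inner (G a) b)))"
            using skew[OF G] by simp
          also have "\<dots> = (inner a X) * (- inner a (G u) + inner u (G a))"
            by (simp add: sum_negf euclidean_inner[symmetric])
          also have "\<dots> = 0"
            using Gu[OF G aW] uW[OF inv[OF G aW]] by (simp add: inner_commute)
          finally show "ip2 (\<phi> X) G = 0" .
        qed
        ultimately show "\<phi> X \<in> perp2 g" unfolding perp2_def by auto
      qed
      have imp: "(\<forall>v. linear (\<lambda>X. \<phi> X v)) \<and> (\<forall>X. \<phi> X \<in> perp2 g) \<longrightarrow>
          (\<exists>T. alt3 T \<and> (\<forall>X. proj_perp g (contr X T) = \<phi> X))"
        using assms(2) unfolding eps_perp_surj_def by (rule spec)
      have "\<exists>T. alt3 T \<and> (\<forall>X. proj_perp g (contr X T) = \<phi> X)"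
        using imp lin perp by (rule mp[OF _ conjI])
      then obtain T where TT: "alt3 T \<and> (\<forall>X. proj_perp g (contr X T) = \<phi> X)" ..
      have T: "alt3 T" using TT by (rule conjunct1)
      have TX: "\<And>X. proj_perp g (contr X T) = \<phi> X" using TT by simp
      define F where "F = contr a T"
      have linz: "\<And>x y. linear (\<lambda>z. T x y z)" and liny: "\<And>x z. linear (\<lambda>y. T x y z)"
        and as1: "\<And>x y z. T x y z = - T x z y" and as0: "\<And>x y z. T x y z = - T y x z"
        using T unfolding alt3_def by blast+
      have key: "\<And>Y Z. inner (F Y) Z = T a Y Z"
      proof -
        fix Y Z
        have "inner (F Y) Z = (\<Sum>b\<in>Basis. T a Y b * inner b Z)"
          by (simp add: F_def contr_def inner_sum_left)
        also have "\<dots> = (\<Sum>b\<in>Basis. T a Y ((inner Z b) *\<^sub>R b))"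
          by (rule sum.cong[OF refl]) (simp add: linear_scale[OF linz] inner_commute)
        also have "\<dots> = T a Y (\<Sum>b\<in>Basis. (inner Z b) *\<^sub>R b)"
          by (rule linear_sum[OF linz, symmetric])
        also have "\<dots> = T a Y Z" by (simp add: euclidean_representation)
        finally show "inner (F Y) Z = T a Y Z" .
      qed
      have Fso: "F \<in> so_V" unfolding so_V_def
      proof (intro CollectI conjI allI)
        show "linear F"
        proof (rule linearI)
          fix x y
          show "F (x + y) = F x + F y"
            by (rule euclidean_eqI) (simp add: key inner_add_left linear_add[OF liny])
        next
          fix c x
          show "F (c *\<^sub>R x) = c *\<^sub>R F x"
            by (rule euclidean_eqI) (simp add: key linear_scale[OF liny])
        qed
        fix y z
        show "inner (F y) z = - inner y (F z)"
          using key[of y z] key[of z y] as1[of a y z] inner_commute[of y "F z"] by simp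
      qed
      have pp: "proj_perp g F \<in> perp2 g \<and> (\<lambda>x. F x - proj_perp g F x) \<in> g"
        by (rule proj_prop[OF assms(1) Fso])
      then have Gg: "(\<lambda>x. F x - \<phi> a x) \<in> g" using TX F_def by simp
      have "F a - \<phi> a a \<in> W" using inv[OF Gg aW] by simp
      then have e1: "inner u (F a - \<phi> a a) = 0" using uW by blast
      have e2: "inner (F a) u = 0" using key[of a u] as0[of a a u] by simp
      have ua: "inner u a = 0" using uW aW by blast
      have "inner (\<phi> a a) u = (inner a a) * (inner a a * inner u u)"
        using ua by (simp add: \<phi>_def inner_diff_left inner_commute[of a u])
      moreover have "inner (\<phi> a a) u \<noteq> 0" using a0 u0 calculation by simp
      ultimately show False using e1 e2 inner_commute[of u "F a"] inner_commute[of u "\<phi> a a"]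
        by (simp add: inner_diff_right)
    qed
  qed
qed

end
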